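(* Let $\mathcal{G}$, $u$, $v$ be as in the context, and suppose the weights of the red edges $e$ are independent random variables, each with a probability density function $f_e:(0,\infty)\to[0,\phi_e]$ for some $\phi_e>0$, while green edge weights are fixed. Then for every $0\le r<r_{tot}$ and every $\varepsilon>0$, $$\mathbb{P}\big(\Delta(r)\le r+\varepsilon\big)\le\Big(\sum_{e\text{ red}}\phi_e\Big)\cdot\varepsilon .$$
   Context: $\mathcal{G}=\langle V,E,\omega,\lambda\rangle$ is a finite weighted coloured--edge graph (directed multigraph, weights $\omega:E\to\mathbb{R}^+$, colours $\lambda:E\to M$) with $M=\{\text{red},\text{green}\}$. A path from $u$ to $v$ is a sequence of consecutive edges from $u$ to $v$ visiting no vertex twice; $\omega_{\text{red}}(p)$, $\omega_{\text{green}}(p)$ denote the sums of weights of the red, resp. green, edges of $p$. A path $p$ from $u$ to $v$ is minimal if there is no path $q$ from $u$ to $v$ with $\omega_{\text{red}}(q)\le\omega_{\text{red}}(p)$, $\omega_{\text{green}}(q)\le\omega_{\text{green}}(p)$ and at least one inequality strict. It is assumed there is a path from $u$ to $v$ all of whose edges are green and a path from $u$ to $v$ all of whose edges are red; $r_{tot}$ is the least red weight of a path from $u$ to $v$ all of whose edges are red. For $0\le r<r_{tot}$, $\Delta(r)$ is the least value of $\omega_{\text{red}}(q)$ over all minimal paths $q$ from $u$ to $v$ with $\omega_{\text{red}}(q)>r$. *)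

theory Defs
  imports "HOL-Probability.Probability"
begin

datatype colour = Red | Green

text \<open>A finite directed multigraph: edge set E (of an arbitrary edge type), with
  source and target maps.\<close>

fun walk :: "'e set \<Rightarrow> ('e \<Rightarrow> 'v) \<Rightarrow> ('e \<Rightarrow> 'v) \<Rightarrow> 'v \<Rightarrow> 'v \<Rightarrow> 'e list \<Rightarrow> bool" where
  "walk E src tgt u v [] \<longleftrightarrow> u = v"
| "walk E src tgt u v (e # es) \<longleftrightarrow> e \<in> E \<and> src e = u \<and> walk E src tgt (tgt e) v es"

definition is_path :: "'e set \<Rightarrow> ('e \<Rightarrow> 'v) \<Rightarrow> ('e \<Rightarrow> 'v) \<Rightarrow> 'v \<Rightarrow> 'v \<Rightarrow> 'e list \<Rightarrow> bool" where
  "is_path E src tgt u v p \<longleftrightarrow> walk E src tgt u v p \<and> distinct (u # map tgt p)"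

definition col_weight :: "('e \<Rightarrow> colour) \<Rightarrow> colour \<Rightarrow> ('e \<Rightarrow> real) \<Rightarrow> 'e list \<Rightarrow> real" where
  "col_weight lam c w p = sum_list (map (\<lambda>e. if lam e = c then w e else 0) p)"

definition minimal_path ::
  "'e set \<Rightarrow> ('e \<Rightarrow> 'v) \<Rightarrow> ('e \<Rightarrow> 'v) \<Rightarrow> ('e \<Rightarrow> colour) \<Rightarrow> ('e \<Rightarrow> real) \<Rightarrow> 'v \<Rightarrow> 'v \<Rightarrow> 'e list \<Rightarrow> bool" where
  "minimal_path E src tgt lam w u v p \<longleftrightarrow> is_path E src tgt u v p \<and>
     \<not> (\<exists>q. is_path E src tgt u v q \<and>
            col_weight lam Red w q \<le> col_weight lam Red w p \<and>
            col_weight lam Green w q \<le> col_weight lam Green w p \<and>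
            (col_weight lam Red w q < col_weight lam Red w p \<or>
             col_weight lam Green w q < col_weight lam Green w p))"

definition r_tot ::
  "'e set \<Rightarrow> ('e \<Rightarrow> 'v) \<Rightarrow> ('e \<Rightarrow> 'v) \<Rightarrow> ('e \<Rightarrow> colour) \<Rightarrow> ('e \<Rightarrow> real) \<Rightarrow> 'v \<Rightarrow> 'v \<Rightarrow> real" where
  "r_tot E src tgt lam w u v =
     Min {col_weight lam Red w p | p. is_path E src tgt u v p \<and> (\<forall>e\<in>set p. lam e = Red)}"

definition Delta ::
  "'e set \<Rightarrow> ('e \<Rightarrow> 'v) \<Rightarrow> ('e \<Rightarrow> 'v) \<Rightarrow> ('e \<Rightarrow> colour) \<Rightarrow> ('e \<Rightarrow> real) \<Rightarrow> 'v \<Rightarrow> 'v \<Rightarrow> real \<Rightarrow> real" where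
  "Delta E src tgt lam w u v r =
     Min {col_weight lam Red w q | q. minimal_path E src tgt lam w u v q \<and> col_weight lam Red w q > r}"

end

theory Submission
  imports Defs
begin



lemma walk_set: "walk E src tgt u v p \<Longrightarrow> set p \<subseteq> E"
  by (induction p arbitrary: u) auto

lemma path_set: "is_path E src tgt u v p \<Longrightarrow> set p \<subseteq> E"
  unfolding is_path_def using walk_set[of E src tgt u v p] by simp

lemma path_distinct: "is_path E src tgt u v p \<Longrightarrow> distinct p"
  unfolding is_path_def by (auto simp: distinct_map)

lemma finite_paths:
  assumes "finite E" shows "finite {p. is_path E src tgt u v p}"
proof -
  have "{p. is_path E src tgt u v p} \<subseteq> {xs. set xs \<subseteq> E \<and> length xs \<le> card E}"
  proof
    fix p assume "p \<in> {p. is_path E src tgt u v p}"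
    then have p: "is_path E src tgt u v p" by simp
    have s: "set p \<subseteq> E" using path_set[OF p] .
    have "length p = card (set p)" using distinct_card[OF path_distinct[OF p]] by simp
    also have "\<dots> \<le> card E" using card_mono[OF assms s] .
    finally show "p \<in> {xs. set xs \<subseteq> E \<and> length xs \<le> card E}" using s by simp
  qed
  then show ?thesis by (rule finite_subset) (rule finite_lists_length_le[OF assms])
qed

lemma col_weight_cong:
  "(\<And>e. e \<in> set p \<Longrightarrow> w1 e = w2 e) \<Longrightarrow> col_weight lam c w1 p = col_weight lam c w2 p"
  unfolding col_weight_def by (induction p) auto

lemma col_weight_nonneg:
  "(\<And>e. e \<in> set p \<Longrightarrow> lam e = c \<Longrightarrow> 0 \<le> w e) \<Longrightarrow> 0 \<le> col_weight lam c w p"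
  unfolding col_weight_def by (induction p) auto

lemma col_weight_zero:
  "(\<And>e. e \<in> set p \<Longrightarrow> lam e \<noteq> c) \<Longrightarrow> col_weight lam c w p = 0"
  unfolding col_weight_def by (induction p) auto

lemma col_weight_upd_other:
  "lam e \<noteq> c \<Longrightarrow> col_weight lam c (w(e:=x)) p = col_weight lam c w p"
  unfolding col_weight_def by (induction p) auto

lemma col_weight_upd_notin:
  "e \<notin> set p \<Longrightarrow> col_weight lam c (w(e:=x)) p = col_weight lam c w p"
  by (rule col_weight_cong) auto

lemma col_weight_upd_in:
  "lam e = c \<Longrightarrow> distinct p \<Longrightarrow> e \<in> set p \<Longrightarrow>
   col_weight lam c (w(e:=x)) p = col_weight lam c (w(e:=0)) p + x"
proof (induction p)
  case Nil then show ?case by simp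
next
  case (Cons a p)
  show ?case
  proof (cases "a = e")
    case True
    then have "e \<notin> set p" using Cons by auto
    then have "col_weight lam c (w(e:=x)) p = col_weight lam c (w(e:=0)) p"
      by (metis col_weight_upd_notin fun_upd_upd)
    then show ?thesis using True Cons.prems unfolding col_weight_def by simp
  next
    case False
    then show ?thesis using Cons unfolding col_weight_def by auto
  qed
qed

lemma col_weight_sum:
  "distinct p \<Longrightarrow> col_weight lam c w p = (\<Sum>e\<in>set p. if lam e = c then w e else 0)"
  unfolding col_weight_def by (rule sum_list_distinct_conv_sum_set)

definition goodP :: "'e list set \<Rightarrow> 'e \<Rightarrow> ('e list \<Rightarrow> real) \<Rightarrow> ('e list \<Rightarrow> real) \<Rightarrow> real \<Rightarrow> real \<Rightarrow> bool" where
  "goodP P e R G r \<epsilon> \<longleftrightarrow>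
    (\<exists>s\<in>P. e \<in> set s \<and> r < R s \<and> R s \<le> r + \<epsilon> \<and>
       (\<forall>t\<in>P. e \<notin> set t \<longrightarrow> R t \<le> r \<longrightarrow> G s < G t) \<and>
       (\<forall>s'\<in>P. e \<in> set s' \<longrightarrow> (\<forall>t\<in>P. e \<notin> set t \<longrightarrow> R t \<le> r \<longrightarrow> G s' < G t) \<longrightarrow> R s \<le> R s'))"

lemma goodP_cong:
  assumes "\<And>p. p \<in> P \<Longrightarrow> R1 p = R2 p" "\<And>p. p \<in> P \<Longrightarrow> G1 p = G2 p"
  shows "goodP P e R1 G1 r \<epsilon> = goodP P e R2 G2 r \<epsilon>"
proof -
  have inner: "\<And>x. (\<forall>t\<in>P. e \<notin> set t \<longrightarrow> R1 t \<le> r \<longrightarrow> x < G1 t) =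
                  (\<forall>t\<in>P. e \<notin> set t \<longrightarrow> R2 t \<le> r \<longrightarrow> x < G2 t)"
    using assms by auto
  show ?thesis unfolding goodP_def
  proof (rule bex_cong[OF refl])
    fix s assume s: "s \<in> P"
    have "(\<forall>s'\<in>P. e \<in> set s' \<longrightarrow> (\<forall>t\<in>P. e \<notin> set t \<longrightarrow> R1 t \<le> r \<longrightarrow> G1 s' < G1 t) \<longrightarrow> R1 s \<le> R1 s') =
          (\<forall>s'\<in>P. e \<in> set s' \<longrightarrow> (\<forall>t\<in>P. e \<notin> set t \<longrightarrow> R2 t \<le> r \<longrightarrow> G2 s' < G2 t) \<longrightarrow> R2 s \<le> R2 s')"
    proof (rule ball_cong[OF refl])
      fix s' assume s': "s' \<in> P"
      show "(e \<in> set s' \<longrightarrow> (\<forall>t\<in>P. e \<notin> set t \<longrightarrow> R1 t \<le> r \<longrightarrow> G1 s' < G1 t) \<longrightarrow> R1 s \<le> R1 s') =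
            (e \<in> set s' \<longrightarrow> (\<forall>t\<in>P. e \<notin> set t \<longrightarrow> R2 t \<le> r \<longrightarrow> G2 s' < G2 t) \<longrightarrow> R2 s \<le> R2 s')"
        using inner[of "G1 s'"] assms(1)[OF s] assms(1)[OF s'] assms(2)[OF s'] by simp
    qed
    then show "(e \<in> set s \<and> r < R1 s \<and> R1 s \<le> r + \<epsilon> \<and>
       (\<forall>t\<in>P. e \<notin> set t \<longrightarrow> R1 t \<le> r \<longrightarrow> G1 s < G1 t) \<and>
       (\<forall>s'\<in>P. e \<in> set s' \<longrightarrow> (\<forall>t\<in>P. e \<notin> set t \<longrightarrow> R1 t \<le> r \<longrightarrow> G1 s' < G1 t) \<longrightarrow> R1 s \<le> R1 s')) =
       (e \<in> set s \<and> r < R2 s \<and> R2 s \<le> r + \<epsilon> \<and>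
       (\<forall>t\<in>P. e \<notin> set t \<longrightarrow> R2 t \<le> r \<longrightarrow> G2 s < G2 t) \<and>
       (\<forall>s'\<in>P. e \<in> set s' \<longrightarrow> (\<forall>t\<in>P. e \<notin> set t \<longrightarrow> R2 t \<le> r \<longrightarrow> G2 s' < G2 t) \<longrightarrow> R2 s \<le> R2 s'))"
      using inner[of "G1 s"] assms(1)[OF s] assms(2)[OF s] by simp
  qed
qed

definition good where
  "good E src tgt lam u v r \<epsilon> e w \<longleftrightarrow>
    goodP {p. is_path E src tgt u v p} e (col_weight lam Red w) (col_weight lam Green w) r \<epsilon>"

lemma good_cong:
  assumes "\<And>e. e \<in> E \<Longrightarrow> w1 e = w2 e"
  shows "good E src tgt lam u v r \<epsilon> e w1 = good E src tgt lam u v r \<epsilon> e w2"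
proof -
  have "\<And>c p. p \<in> {p. is_path E src tgt u v p} \<Longrightarrow> col_weight lam c w1 p = col_weight lam c w2 p"
  proof -
    fix c p assume "p \<in> {p. is_path E src tgt u v p}"
    then have "set p \<subseteq> E" by (simp add: path_set)
    then show "col_weight lam c w1 p = col_weight lam c w2 p"
      using assms by (intro col_weight_cong) auto
  qed
  then show ?thesis unfolding good_def by (intro goodP_cong) auto
qed

lemma exists_min:
  fixes h :: "'a \<Rightarrow> real"
  assumes "finite S" "x \<in> S" shows "\<exists>s\<in>S. \<forall>s'\<in>S. h s \<le> h s'"
proof -
  have "Min (h ` S) \<in> h ` S" using assms by (intro Min_in) auto
  then obtain s where "s \<in> S" "h s = Min (h ` S)" by auto
  then have "\<forall>s'\<in>S. h s \<le> h s'" using assms(1) by auto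
  then show ?thesis using \<open>s \<in> S\<close> by blast
qed

lemma det_stop: True by simp

lemma det:
  assumes finE: "finite E"
    and green_path: "\<exists>p. is_path E src tgt u v p \<and> (\<forall>e\<in>set p. lam e = Green)"
    and red_path: "\<exists>p. is_path E src tgt u v p \<and> (\<forall>e\<in>set p. lam e = Red)"
    and gpos: "\<forall>e\<in>E. lam e = Green \<longrightarrow> w e > 0"
    and rnn: "\<forall>e\<in>E. lam e = Red \<longrightarrow> w e \<ge> 0"
    and r0: "0 \<le> r"
    and rt: "r < r_tot E src tgt lam w u v"
    and dl: "Delta E src tgt lam w u v r \<le> r + \<epsilon>"
  shows "\<exists>e\<in>E. lam e = Red \<and> good E src tgt lam u v r \<epsilon> e w"
proof -
  let ?P = "{p. is_path E src tgt u v p}"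
  let ?R = "col_weight lam Red w" and ?G = "col_weight lam Green w"
  have finP: "finite ?P" using finite_paths[OF finE] .
  have sEP: "\<And>p. p \<in> ?P \<Longrightarrow> set p \<subseteq> E" by (simp add: path_set)
  have Gnn: "\<And>p. p \<in> ?P \<Longrightarrow> 0 \<le> ?G p"
  proof -
    fix p assume "p \<in> ?P"
    then have "set p \<subseteq> E" by (rule sEP)
    then show "0 \<le> ?G p" using gpos by (intro col_weight_nonneg) auto
  qed
  have G0: "\<And>p. p \<in> ?P \<Longrightarrow> ?G p = 0 \<Longrightarrow> \<forall>e\<in>set p. lam e = Red"
  proof (rule ccontr)
    fix p assume p: "p \<in> ?P" "?G p = 0" "\<not> (\<forall>e\<in>set p. lam e = Red)"
    then obtain e where e: "e \<in> set p" "lam e = Green" by (metis colour.exhaust)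
    have d: "distinct p" using p path_distinct by auto
    have sE: "set p \<subseteq> E" using p path_set[of E src tgt u v p] by auto
    have "?G p = (\<Sum>e\<in>set p. if lam e = Green then w e else 0)" using col_weight_sum[OF d] .
    also have "\<dots> \<ge> (if lam e = Green then w e else 0)"
      using e sE gpos by (intro member_le_sum) auto
    finally show False using e sE gpos p by auto
  qed
  have Gred: "\<And>p. \<forall>e\<in>set p. lam e = Red \<Longrightarrow> ?G p = 0"
    by (rule col_weight_zero) auto
  let ?A = "{p\<in>?P. \<forall>e\<in>set p. lam e = Red}"
  obtain pr where pr: "pr \<in> ?A" using red_path by auto
  have finA: "finite ?A" using finP by auto
  obtain p0 where p0: "p0 \<in> ?A" "\<forall>s\<in>?A. ?R p0 \<le> ?R s"
    using exists_min[where h="?R", OF finA pr] by blast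
  have rt_eq: "r_tot E src tgt lam w u v = ?R p0"
    unfolding r_tot_def
    using p0 finP by (intro Min_eqI) (auto simp: setcompr_eq_image)
  have p0min: "minimal_path E src tgt lam w u v p0"
    unfolding minimal_path_def
  proof (intro conjI notI)
    show "is_path E src tgt u v p0" using p0 by auto
  next
    assume "\<exists>q. is_path E src tgt u v q \<and> ?R q \<le> ?R p0 \<and> ?G q \<le> ?G p0 \<and> (?R q < ?R p0 \<or> ?G q < ?G p0)"
    then obtain q where q: "q \<in> ?P" "?R q \<le> ?R p0" "?G q \<le> ?G p0" "?R q < ?R p0 \<or> ?G q < ?G p0"
      by blast
    have G00: "?G p0 = 0" using p0(1) Gred by blast
    have Gq0: "?G q = 0" using q(3) Gnn[OF q(1)] G00 by linarith
    then have "q \<in> ?A" using G0[OF q(1) Gq0] q(1) by blast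
    then have "?R p0 \<le> ?R q" using p0(2) by blast
    then show False using q(2,4) G00 Gq0 by linarith
  qed
  let ?D = "{q. minimal_path E src tgt lam w u v q \<and> r < ?R q}"
  have Dsub: "?D \<subseteq> ?P" unfolding minimal_path_def by auto
  have p0D: "p0 \<in> ?D" using p0min rt rt_eq by auto
  obtain q where q: "q \<in> ?D" "\<forall>s\<in>?D. ?R q \<le> ?R s"
    using exists_min[where h="?R", OF finite_subset[OF Dsub finP] p0D] by blast
  have Deq: "Delta E src tgt lam w u v r = ?R q"
    unfolding Delta_def
    using q finite_subset[OF Dsub finP] by (intro Min_eqI) (auto simp: setcompr_eq_image)
  have qP: "q \<in> ?P" using q Dsub by auto
  have qr: "r < ?R q" "?R q \<le> r + \<epsilon>" using q dl Deq by auto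
  let ?T = "{t\<in>?P. ?R t \<le> r}"
  obtain pg where pg: "pg \<in> ?P" "\<forall>e\<in>set pg. lam e = Green" using green_path by auto
  have "?R pg = 0" using pg(2) by (intro col_weight_zero) auto
  then have pgT: "pg \<in> ?T" using pg r0 by auto
  have "?T \<subseteq> ?P" by blast
  then have finT: "finite ?T" by (rule finite_subset) (rule finP)
  obtain p where p: "p \<in> ?T" "\<forall>t\<in>?T. ?G p \<le> ?G t"
    using exists_min[where h="?G", OF finT pgT] by blast
  have qT: "\<forall>t\<in>?T. ?G q < ?G t"
  proof
    fix t assume t: "t \<in> ?T"
    show "?G q < ?G t"
    proof (rule ccontr)
      assume "\<not> ?G q < ?G t"
      then have "?G t \<le> ?G q" by auto
      moreover have "?R t < ?R q" using t qr by auto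
      moreover have mq: "minimal_path E src tgt lam w u v q" using q(1) by blast
      moreover have "is_path E src tgt u v t" using t by blast
      ultimately show False unfolding minimal_path_def by (meson less_imp_le)
    qed
  qed
  have "\<exists>e\<in>set q. lam e = Red \<and> e \<notin> set p"
  proof (rule ccontr)
    assume H: "\<not> ?thesis"
    have dq: "distinct q" and dp: "distinct p" using qP p path_distinct by auto
    let ?h = "\<lambda>e. if lam e = Red then w e else 0"
    have "?R q = sum ?h (set q)" using col_weight_sum[OF dq] .
    also have "\<dots> = sum ?h (set q \<inter> {e. lam e = Red})"
      by (rule sum.mono_neutral_right) auto
    also have "\<dots> \<le> sum ?h (set p)"
      using H p rnn path_set[of E src tgt u v p]
      by (intro sum_mono2) auto
    also have "\<dots> = ?R p" using col_weight_sum[OF dp] by simp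
    finally show False using p qr by auto
  qed
  then obtain e where e: "e \<in> set q" "lam e = Red" "e \<notin> set p" by blast
  have eE: "e \<in> E" using e qP path_set[of E src tgt u v q] by auto
  let ?C = "{s\<in>?P. e \<in> set s \<and> (\<forall>t\<in>?P. e \<notin> set t \<longrightarrow> ?R t \<le> r \<longrightarrow> ?G s < ?G t)}"
  have qC: "q \<in> ?C" using qP e qT by auto
  have "?C \<subseteq> ?P" by (rule subsetI) (simp only: mem_Collect_eq)
  then have finC: "finite ?C" by (rule finite_subset) (rule finP)
  obtain s where s: "s \<in> ?C" "\<forall>s'\<in>?C. ?R s \<le> ?R s'"
    using exists_min[where h="?R", OF finC qC] by blast
  have sP: "s \<in> ?P" "e \<in> set s" using s(1) by auto
  have sC: "\<forall>t\<in>?P. e \<notin> set t \<longrightarrow> ?R t \<le> r \<longrightarrow> ?G s < ?G t" using s(1) by blast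
  have smin: "\<forall>s'\<in>?P. e \<in> set s' \<longrightarrow> (\<forall>t\<in>?P. e \<notin> set t \<longrightarrow> ?R t \<le> r \<longrightarrow> ?G s' < ?G t) \<longrightarrow> ?R s \<le> ?R s'"
    using s(2) by blast
  have "?R s \<le> ?R q" using s(2) qC by blast
  then have s1: "?R s \<le> r + \<epsilon>" using qr by linarith
  have pT: "p \<in> ?P" "?R p \<le> r" using p(1) by auto
  have s2: "r < ?R s"
  proof (rule ccontr)
    assume "\<not> r < ?R s"
    then have "s \<in> ?T" using sP by auto
    then have "?G p \<le> ?G s" using p(2) by blast
    moreover have "?G s < ?G p" using sC pT e(3) by blast
    ultimately show False by linarith
  qed
  have "good E src tgt lam u v r \<epsilon> e w"
    unfolding good_def goodP_def
    using sP sC smin s1 s2 by blast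
  then show ?thesis using eE e by auto
qed




definition Wf :: "'e set \<Rightarrow> 'e \<Rightarrow> ('e \<Rightarrow> real) \<Rightarrow> ('e \<Rightarrow> real) \<Rightarrow> ('e \<Rightarrow> real) \<Rightarrow> 'e \<Rightarrow> real" where
  "Wf L e g y z = (\<lambda>e'. if e' \<in> L then y e' else if e' = e then z e else g e')"

lemma Wf_meas:
  assumes "e \<notin> L"
  shows "(\<lambda>z. Wf L e g (fst z) (snd z) a) \<in> borel_measurable (PiM L (\<lambda>_. borel) \<Otimes>\<^sub>M PiM {e} (\<lambda>_. borel))"
proof (cases "a \<in> L")
  case True
  then show ?thesis unfolding Wf_def by simp measurable
next
  case False
  show ?thesis
  proof (cases "a = e")
    case True
    then show ?thesis using False unfolding Wf_def by simp measurable
  next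
    case False2: False
    then show ?thesis using False unfolding Wf_def by simp
  qed
qed

lemma cw_meas:
  assumes "e \<notin> L"
  shows "(\<lambda>z. col_weight lam c (Wf L e g (fst z) (snd z)) s) \<in> borel_measurable (PiM L (\<lambda>_. borel) \<Otimes>\<^sub>M PiM {e} (\<lambda>_. borel))"
proof (induction s)
  case Nil
  then show ?case unfolding col_weight_def by simp
next
  case (Cons a s)
  have eq: "(\<lambda>z. col_weight lam c (Wf L e g (fst z) (snd z)) (a # s)) =
     (\<lambda>z. (if lam a = c then Wf L e g (fst z) (snd z) a else 0) + col_weight lam c (Wf L e g (fst z) (snd z)) s)"
    unfolding col_weight_def by simp
  show ?case unfolding eq
    using Cons Wf_meas[OF assms, of g a] by (intro borel_measurable_add) auto
qed

lemma pl: assumes "f \<in> borel_measurable M" "g \<in> borel_measurable M" shows "Measurable.pred M (\<lambda>w. (f w::real) < g w)"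
  unfolding Measurable.pred_def using assms by (rule borel_measurable_less)

lemma ple: assumes "f \<in> borel_measurable M" "g \<in> borel_measurable M" shows "Measurable.pred M (\<lambda>w. (f w::real) \<le> g w)"
  unfolding Measurable.pred_def using assms by (rule borel_measurable_le)

lemma goodP_meas:
  assumes "finite P"
    and "\<And>s. (\<lambda>z. R z s) \<in> borel_measurable MM" "\<And>s. (\<lambda>z. G z s) \<in> borel_measurable MM"
  shows "Measurable.pred MM (\<lambda>z. goodP P e (R z) (G z) r \<epsilon>)"
  unfolding goodP_def
  apply (rule pred_intros_finite(4)[OF assms(1)])
  apply (rule pred_intros_conj1')
  apply (rule pred_intros_logic(3))
  apply (rule pl; rule assms(2,3) borel_measurable_const)
  apply (rule pred_intros_logic(3))
  apply (rule ple; rule assms(2,3) borel_measurable_const)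
  apply (rule pred_intros_logic(3))
  apply (rule pred_intros_finite(3)[OF assms(1)])
  apply (rule pred_intros_imp')
  apply (rule pred_intros_logic(4))
  apply (rule ple; rule assms(2,3) borel_measurable_const)
  apply (rule pl; rule assms(2,3) borel_measurable_const)
  apply (rule pred_intros_finite(3)[OF assms(1)])
  apply (rule pred_intros_imp')
  apply (rule pred_intros_logic(4))
  apply (rule pred_intros_finite(3)[OF assms(1)])
  apply (rule pred_intros_imp')
  apply (rule pred_intros_logic(4))
  apply (rule ple; rule assms(2,3) borel_measurable_const)
  apply (rule pl; rule assms(2,3) borel_measurable_const)
  apply (rule ple; rule assms(2,3) borel_measurable_const)
  done




lemma prob_slice:
  fixes Xe :: "'m \<Rightarrow> real" and Y Z :: "'m \<Rightarrow> 'y"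
  assumes P: "prob_space M"
    and ind: "prob_space.indep_var M N Y K Z"
    and dist: "distributed M lborel Xe (\<lambda>x. ennreal (f x))"
    and fb: "\<And>x. f x \<le> \<phi>" "\<And>x. 0 \<le> f x"
    and S: "S \<in> sets (N \<Otimes>\<^sub>M K)"
    and sl: "\<And>y. y \<in> space N \<Longrightarrow> \<exists>a. \<forall>\<omega>\<in>space M. (y, Z \<omega>) \<in> S \<longrightarrow> a < Xe \<omega> \<and> Xe \<omega> \<le> a + \<epsilon>"
    and eps: "0 \<le> \<epsilon>"
  shows "emeasure M {\<omega>\<in>space M. (Y \<omega>, Z \<omega>) \<in> S} \<le> ennreal (\<phi> * \<epsilon>)"
proof -
  interpret prob_space M by fact
  have phi0: "0 \<le> \<phi>" using fb[of 0] by linarith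
  have rvY: "random_variable N Y" and rvZ: "random_variable K Z"
    and eq: "distr M N Y \<Otimes>\<^sub>M distr M K Z = distr M (N \<Otimes>\<^sub>M K) (\<lambda>x. (Y x, Z x))"
    using ind indep_var_distribution_eq by auto
  have XL: "Xe \<in> measurable M lborel" using dist by (simp add: distributed_def)
  have fm: "(\<lambda>x. ennreal (f x)) \<in> borel_measurable lborel" using dist by (simp add: distributed_def)
  have dd: "distr M lborel Xe = density lborel (\<lambda>x. ennreal (f x))" using dist by (simp add: distributed_def)
  interpret Zp: prob_space "distr M K Z" by (rule prob_space_distr[OF rvZ])
  interpret Yp: prob_space "distr M N Y" by (rule prob_space_distr[OF rvY])
  have bound: "emeasure (distr M K Z) (Pair y -` S) \<le> ennreal (\<phi> * \<epsilon>)" if y: "y \<in> space N" for y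
  proof -
    obtain a where a: "\<forall>\<omega>\<in>space M. (y, Z \<omega>) \<in> S \<longrightarrow> a < Xe \<omega> \<and> Xe \<omega> \<le> a + \<epsilon>"
      using sl[OF y] by blast
    have B: "Pair y -` S \<in> sets K" using sets_Pair1[OF S] .
    have I: "{a<..a+\<epsilon>} \<in> sets lborel" by simp
    have "emeasure (distr M K Z) (Pair y -` S) = emeasure M (Z -` (Pair y -` S) \<inter> space M)"
      using B rvZ by (simp add: emeasure_distr)
    also have "\<dots> \<le> emeasure M (Xe -` {a<..a+\<epsilon>} \<inter> space M)"
      using a XL by (intro emeasure_mono) auto
    also have "\<dots> = emeasure (distr M lborel Xe) {a<..a+\<epsilon>}"
      using I XL by (simp add: emeasure_distr)
    also have "\<dots> = emeasure (density lborel (\<lambda>x. ennreal (f x))) {a<..a+\<epsilon>}" using dd by simp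
    also have "\<dots> = (\<integral>\<^sup>+x. ennreal (f x) * indicator {a<..a+\<epsilon>} x \<partial>lborel)"
      using fm by (simp add: emeasure_density)
    also have "\<dots> \<le> (\<integral>\<^sup>+x. ennreal \<phi> * indicator {a<..a+\<epsilon>} x \<partial>lborel)"
      using fb by (intro nn_integral_mono) (auto simp: indicator_def intro!: ennreal_leI)
    also have "\<dots> = ennreal \<phi> * emeasure lborel {a<..a+\<epsilon>}"
      by (simp add: nn_integral_cmult_indicator)
    also have "\<dots> = ennreal (\<phi> * \<epsilon>)" using eps phi0 by (simp add: ennreal_mult)
    finally show ?thesis .
  qed
  have "{\<omega>\<in>space M. (Y \<omega>, Z \<omega>) \<in> S} = (\<lambda>x. (Y x, Z x)) -` S \<inter> space M" by auto
  then have "emeasure M {\<omega>\<in>space M. (Y \<omega>, Z \<omega>) \<in> S} = emeasure (distr M (N \<Otimes>\<^sub>M K) (\<lambda>x. (Y x, Z x))) S"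
    using S rvY rvZ by (simp add: emeasure_distr)
  also have "\<dots> = emeasure (distr M N Y \<Otimes>\<^sub>M distr M K Z) S" using eq by simp
  also have "\<dots> = (\<integral>\<^sup>+y. emeasure (distr M K Z) (Pair y -` S) \<partial>distr M N Y)"
    using S by (intro Zp.emeasure_pair_measure_alt) simp
  also have "\<dots> \<le> (\<integral>\<^sup>+y. ennreal (\<phi> * \<epsilon>) \<partial>distr M N Y)"
    using bound by (intro nn_integral_mono) simp
  also have "\<dots> = ennreal (\<phi> * \<epsilon>)"
  proof -
    have "emeasure (distr M N Y) (space N) = 1" using Yp.emeasure_space_1 by simp
    then show ?thesis by simp
  qed
  finally show ?thesis .
qed




lemma slice:
  assumes red: "lam e = Red"
  shows "\<exists>a. \<forall>x. good E src tgt lam u v r \<epsilon> e (w(e:=x)) \<longrightarrow> a < x \<and> x \<le> a + \<epsilon>"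
proof -
  let ?P = "{p. is_path E src tgt u v p}"
  define c where "c = col_weight lam Red (w(e:=0))"
  define Gw where "Gw = col_weight lam Green w"
  define Cd where "Cd = (\<lambda>s'. \<forall>t\<in>?P. e \<notin> set t \<longrightarrow> c t \<le> r \<longrightarrow> Gw s' < Gw t)"
  have rew: "good E src tgt lam u v r \<epsilon> e (w(e:=x)) \<longleftrightarrow>
     (\<exists>s\<in>?P. e \<in> set s \<and> r < c s + x \<and> c s + x \<le> r + \<epsilon> \<and> Cd s \<and>
        (\<forall>s'\<in>?P. e \<in> set s' \<longrightarrow> Cd s' \<longrightarrow> c s + x \<le> c s' + x))" for x
  proof -
    have R: "col_weight lam Red (w(e:=x)) p = (if e \<in> set p then c p + x else c p)" if p: "p \<in> ?P" for p
    proof (cases "e \<in> set p")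
      case True
      have d: "distinct p" using p path_distinct by simp
      show ?thesis using True col_weight_upd_in[where lam=lam and e=e and c=Red and p=p and w=w and x=x, OF red d True] unfolding c_def by simp
    next
      case False
      then show ?thesis unfolding c_def using col_weight_upd_notin[OF False] by simp
    qed
    have G: "col_weight lam Green (w(e:=x)) p = Gw p" for p
      unfolding Gw_def using red by (intro col_weight_upd_other) simp
    have "good E src tgt lam u v r \<epsilon> e (w(e:=x)) =
        goodP ?P e (\<lambda>p. if e \<in> set p then c p + x else c p) Gw r \<epsilon>"
      unfolding good_def by (rule goodP_cong) (use R G in auto)
    also have "\<dots> = (\<exists>s\<in>?P. e \<in> set s \<and> r < c s + x \<and> c s + x \<le> r + \<epsilon> \<and> Cd s \<and>
        (\<forall>s'\<in>?P. e \<in> set s' \<longrightarrow> Cd s' \<longrightarrow> c s + x \<le> c s' + x))"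
      unfolding goodP_def Cd_def
      by (intro bex_cong refl) (simp cong: conj_cong imp_cong)
    finally show ?thesis .
  qed
  show ?thesis
  proof (cases "\<exists>x0. good E src tgt lam u v r \<epsilon> e (w(e:=x0))")
    case False
    then show ?thesis by blast
  next
    case True
    then obtain x0 where "good E src tgt lam u v r \<epsilon> e (w(e:=x0))" by blast
    then obtain s0 where s0: "s0 \<in> ?P" "e \<in> set s0" "Cd s0"
        "\<forall>s'\<in>?P. e \<in> set s' \<longrightarrow> Cd s' \<longrightarrow> c s0 + x0 \<le> c s' + x0"
      unfolding rew by blast
    show ?thesis
    proof (intro exI allI impI)
      fix x assume "good E src tgt lam u v r \<epsilon> e (w(e:=x))"
      then obtain s where s: "s \<in> ?P" "e \<in> set s" "r < c s + x" "c s + x \<le> r + \<epsilon>" "Cd s"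
        "\<forall>s'\<in>?P. e \<in> set s' \<longrightarrow> Cd s' \<longrightarrow> c s + x \<le> c s' + x"
        unfolding rew by blast
      have "c s + x \<le> c s0 + x" using s(6) s0(1,2,3) by blast
      moreover have "c s0 + x0 \<le> c s + x0" using s0(4) s(1,2,5) by blast
      ultimately have "c s = c s0" by linarith
      then show "r - c s0 < x \<and> x \<le> r - c s0 + \<epsilon>" using s(3,4) by linarith
    qed
  qed
qed




theorem corollary6:
  fixes E :: "'e set" and src tgt :: "'e \<Rightarrow> 'v" and lam :: "'e \<Rightarrow> colour"
    and u v :: 'v and g :: "'e \<Rightarrow> real"
    and M :: "'m measure" and X :: "'e \<Rightarrow> 'm \<Rightarrow> real"
    and f :: "'e \<Rightarrow> real \<Rightarrow> real" and \<phi> :: "'e \<Rightarrow> real"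
    and r \<epsilon> :: real
  assumes finE: "finite E"
    and green_path: "\<exists>p. is_path E src tgt u v p \<and> (\<forall>e\<in>set p. lam e = Green)"
    and red_path: "\<exists>p. is_path E src tgt u v p \<and> (\<forall>e\<in>set p. lam e = Red)"
    and green_pos: "\<forall>e\<in>E. lam e = Green \<longrightarrow> g e > 0"
    and P: "prob_space M"
    and indep: "prob_space.indep_vars M (\<lambda>_. borel) X {e\<in>E. lam e = Red}"
    and dens: "\<forall>e\<in>E. lam e = Red \<longrightarrow> distributed M lborel (X e) (\<lambda>x. ennreal (f e x))"
    and f_supp: "\<forall>e\<in>E. lam e = Red \<longrightarrow> (\<forall>x. x \<le> 0 \<longrightarrow> f e x = 0)"
    and f_bound: "\<forall>e\<in>E. lam e = Red \<longrightarrow> (\<forall>x. 0 \<le> f e x \<and> f e x \<le> \<phi> e)"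
    and phi_pos: "\<forall>e\<in>E. lam e = Red \<longrightarrow> \<phi> e > 0"
    and r_nonneg: "0 \<le> r"
    and eps_pos: "\<epsilon> > 0"
  shows "measure M {\<omega> \<in> space M.
            let w = (\<lambda>e. if lam e = Red then X e \<omega> else g e) in
            r < r_tot E src tgt lam w u v \<and> Delta E src tgt lam w u v r \<le> r + \<epsilon>}
         \<le> (\<Sum>e\<in>{e\<in>E. lam e = Red}. \<phi> e) * \<epsilon>"
proof -
  interpret prob_space M by (rule P)
  define RE where "RE = {e\<in>E. lam e = Red}"
  have finR: "finite RE" using finE unfolding RE_def by simp
  define A where "A = {\<omega> \<in> space M.
            let w = (\<lambda>e. if lam e = Red then X e \<omega> else g e) in
            r < r_tot E src tgt lam w u v \<and> Delta E src tgt lam w u v r \<le> r + \<epsilon>}"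
  define L :: "'e \<Rightarrow> 'e set" where "L = (\<lambda>e. RE - {e})"
  define Y where "Y = (\<lambda>e \<omega>. restrict (\<lambda>i. X i \<omega>) (L e))"
  define Z where "Z = (\<lambda>e \<omega>. restrict (\<lambda>i. X i \<omega>) {e})"
  define NN :: "'e \<Rightarrow> ('e \<Rightarrow> real) measure" where "NN = (\<lambda>e. PiM (L e) (\<lambda>_. borel :: real measure))"
  define KK :: "'e \<Rightarrow> ('e \<Rightarrow> real) measure" where "KK = (\<lambda>e. PiM {e} (\<lambda>_. borel :: real measure))"
  define S where "S = (\<lambda>e. {z \<in> space (NN e \<Otimes>\<^sub>M KK e).
       good E src tgt lam u v r \<epsilon> e (Wf (L e) e g (fst z) (snd z))})"
  define B where "B = (\<lambda>e. {\<omega>\<in>space M. (Y e \<omega>, Z e \<omega>) \<in> S e})"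
  define N0 where "N0 = (\<lambda>e. {\<omega>\<in>space M. X e \<omega> \<le> 0})"
  have ind': "indep_vars (\<lambda>_. borel) X RE" using indep unfolding RE_def .
  have rvX: "X e \<in> borel_measurable M" if "e \<in> RE" for e
    using ind' that unfolding indep_vars_def2 by auto
  have eL: "e \<notin> L e" for e unfolding L_def by simp
  have Smeas: "S e \<in> sets (NN e \<Otimes>\<^sub>M KK e)" for e
  proof -
    have "Measurable.pred (NN e \<Otimes>\<^sub>M KK e)
        (\<lambda>z. goodP {p. is_path E src tgt u v p} e
              (\<lambda>s. col_weight lam Red (Wf (L e) e g (fst z) (snd z)) s)
              (\<lambda>s. col_weight lam Green (Wf (L e) e g (fst z) (snd z)) s) r \<epsilon>)"
      unfolding NN_def KK_def
      by (rule goodP_meas[OF finite_paths[OF finE]]) (rule cw_meas[OF eL])+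
    then show ?thesis unfolding S_def good_def Measurable.pred_def by simp
  qed
  have Ysp: "(Y e \<omega>, Z e \<omega>) \<in> space (NN e \<Otimes>\<^sub>M KK e)" for e \<omega>
    unfolding NN_def KK_def Y_def Z_def by (simp add: space_pair_measure space_PiM)
  have Bbound: "emeasure M (B e) \<le> ennreal (\<phi> e * \<epsilon>)" if e: "e \<in> RE" for e
  proof -
    have eE: "e \<in> E" "lam e = Red" using e unfolding RE_def by auto
    have indYZ: "indep_var (NN e) (Y e) (KK e) (Z e)"
      unfolding NN_def KK_def Y_def Z_def
      by (rule indep_var_restrict[OF ind']) (auto simp: L_def e)
    show ?thesis unfolding B_def
    proof (rule prob_slice[OF P indYZ])
      show "distributed M lborel (X e) (\<lambda>x. ennreal (f e x))" using dens eE by auto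
      show "\<And>x. f e x \<le> \<phi> e" "\<And>x. 0 \<le> f e x" using f_bound eE by auto
      show "S e \<in> sets (NN e \<Otimes>\<^sub>M KK e)" by (rule Smeas)
      show "0 \<le> \<epsilon>" using eps_pos by simp
      fix y assume y: "y \<in> space (NN e)"
      define w0 where "w0 = Wf (L e) e g y (\<lambda>_. 0)"
      obtain a where a: "\<forall>x. good E src tgt lam u v r \<epsilon> e (w0(e:=x)) \<longrightarrow> a < x \<and> x \<le> a + \<epsilon>"
        using slice[where lam=lam and e=e and E=E and src=src and tgt=tgt and u=u and v=v and r=r and \<epsilon>=\<epsilon> and w=w0, OF eE(2)] by blast
      have "\<forall>\<omega>\<in>space M. (y, Z e \<omega>) \<in> S e \<longrightarrow> a < X e \<omega> \<and> X e \<omega> \<le> a + \<epsilon>"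
      proof (intro ballI impI)
        fix \<omega> assume "(y, Z e \<omega>) \<in> S e"
        then have "good E src tgt lam u v r \<epsilon> e (Wf (L e) e g y (Z e \<omega>))" unfolding S_def by simp
        moreover have "Wf (L e) e g y (Z e \<omega>) = w0(e := X e \<omega>)"
          unfolding w0_def Wf_def Z_def using eL[of e] by (auto simp: fun_eq_iff)
        ultimately show "a < X e \<omega> \<and> X e \<omega> \<le> a + \<epsilon>" using a by simp
      qed
      then show "\<exists>a. \<forall>\<omega>\<in>space M. (y, Z e \<omega>) \<in> S e \<longrightarrow> a < X e \<omega> \<and> X e \<omega> \<le> a + \<epsilon>" by blast
    qed
  qed
  have Bsets: "B e \<in> sets M" if e: "e \<in> RE" for e
  proof -
    have "(\<lambda>\<omega>. (Y e \<omega>, Z e \<omega>)) \<in> measurable M (NN e \<Otimes>\<^sub>M KK e)"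
      unfolding NN_def KK_def Y_def Z_def L_def using rvX e
      by (intro measurable_Pair measurable_restrict) auto
    then have "(\<lambda>\<omega>. (Y e \<omega>, Z e \<omega>)) -` S e \<inter> space M \<in> sets M" using Smeas by (rule measurable_sets)
    moreover have "(\<lambda>\<omega>. (Y e \<omega>, Z e \<omega>)) -` S e \<inter> space M = B e" unfolding B_def by auto
    ultimately show ?thesis by simp
  qed
  have N0sets: "N0 e \<in> sets M" if e: "e \<in> RE" for e
    unfolding N0_def using rvX[OF e] by measurable
  have N0zero: "emeasure M (N0 e) = 0" if e: "e \<in> RE" for e
  proof -
    have eE: "e \<in> E" "lam e = Red" using e unfolding RE_def by auto
    have dist: "distributed M lborel (X e) (\<lambda>x. ennreal (f e x))" using dens eE by auto
    have XL: "X e \<in> measurable M lborel" using dist by (simp add: distributed_def)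
    have fm: "(\<lambda>x. ennreal (f e x)) \<in> borel_measurable lborel" using dist by (simp add: distributed_def)
    have dd: "distr M lborel (X e) = density lborel (\<lambda>x. ennreal (f e x))" using dist by (simp add: distributed_def)
    have "N0 e = X e -` {..0} \<inter> space M" unfolding N0_def by auto
    then have "emeasure M (N0 e) = emeasure (distr M lborel (X e)) {..0}"
      using XL by (simp add: emeasure_distr)
    also have "\<dots> = (\<integral>\<^sup>+x. ennreal (f e x) * indicator {..0} x \<partial>lborel)"
      using fm dd by (simp add: emeasure_density)
    also have "(\<lambda>x. ennreal (f e x) * indicator {..0} x) = (\<lambda>x. 0)"
      using f_supp eE by (intro ext) (auto simp: indicator_def)
    finally show ?thesis by simp
  qed
  have cover: "A \<subseteq> (\<Union>e\<in>RE. N0 e) \<union> (\<Union>e\<in>RE. B e)"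
  proof
    fix \<omega> assume "\<omega> \<in> A"
    then have om: "\<omega> \<in> space M"
      and H: "r < r_tot E src tgt lam (\<lambda>e. if lam e = Red then X e \<omega> else g e) u v"
             "Delta E src tgt lam (\<lambda>e. if lam e = Red then X e \<omega> else g e) u v r \<le> r + \<epsilon>"
      unfolding A_def by (auto simp: Let_def)
    show "\<omega> \<in> (\<Union>e\<in>RE. N0 e) \<union> (\<Union>e\<in>RE. B e)"
    proof (cases "\<exists>e\<in>RE. X e \<omega> \<le> 0")
      case True
      then show ?thesis using om unfolding N0_def by auto
    next
      case False
      define w where "w = (\<lambda>e. if lam e = Red then X e \<omega> else g e)"
      have gp: "\<forall>e\<in>E. lam e = Green \<longrightarrow> w e > 0" using green_pos unfolding w_def by auto
      have rn: "\<forall>e\<in>E. lam e = Red \<longrightarrow> w e \<ge> 0" using False unfolding w_def RE_def by force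
      obtain e where e: "e \<in> E" "lam e = Red" "good E src tgt lam u v r \<epsilon> e w"
        using det[OF finE green_path red_path gp rn r_nonneg H[folded w_def]] by blast
      have eR: "e \<in> RE" using e unfolding RE_def by simp
      have "Wf (L e) e g (Y e \<omega>) (Z e \<omega>) e' = w e'" if "e' \<in> E" for e'
        using that e(2) unfolding Wf_def Y_def Z_def w_def L_def RE_def by auto
      then have "good E src tgt lam u v r \<epsilon> e (Wf (L e) e g (Y e \<omega>) (Z e \<omega>))"
        using e(3) good_cong by metis
      then have "\<omega> \<in> B e" unfolding B_def S_def using om Ysp by simp
      then show ?thesis using eR by blast
    qed
  qed
  have U1: "(\<Union>e\<in>RE. N0 e) \<in> sets M" using N0sets finR by blast
  have U2: "(\<Union>e\<in>RE. B e) \<in> sets M" using Bsets finR by blast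
  have mB: "measure M (B e) \<le> \<phi> e * \<epsilon>" if e: "e \<in> RE" for e
  proof -
    have "ennreal (measure M (B e)) \<le> ennreal (\<phi> e * \<epsilon>)"
      using Bbound[OF e] by (simp add: emeasure_eq_measure)
    moreover have "0 \<le> \<phi> e * \<epsilon>" using phi_pos eps_pos e unfolding RE_def by auto
    ultimately show ?thesis by (simp add: ennreal_le_iff)
  qed
  have mN: "measure M (N0 e) = 0" if e: "e \<in> RE" for e
    using N0zero[OF e] by (simp add: measure_def)
  have "measure M A \<le> measure M ((\<Union>e\<in>RE. N0 e) \<union> (\<Union>e\<in>RE. B e))"
    using cover U1 U2 by (intro finite_measure_mono) auto
  also have "\<dots> \<le> measure M (\<Union>e\<in>RE. N0 e) + measure M (\<Union>e\<in>RE. B e)"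
    using U1 U2 by (rule measure_Un_le)
  also have "measure M (\<Union>e\<in>RE. N0 e) \<le> (\<Sum>e\<in>RE. measure M (N0 e))"
    using finR N0sets by (intro finite_measure_subadditive_finite) auto
  also have "(\<Sum>e\<in>RE. measure M (N0 e)) = 0" using mN by simp
  also have "measure M (\<Union>e\<in>RE. B e) \<le> (\<Sum>e\<in>RE. measure M (B e))"
    using finR Bsets by (intro finite_measure_subadditive_finite) auto
  also have "\<dots> \<le> (\<Sum>e\<in>RE. \<phi> e * \<epsilon>)" using mB by (rule sum_mono)
  also have "\<dots> = (\<Sum>e\<in>RE. \<phi> e) * \<epsilon>" by (simp add: sum_distrib_right)
  finally show ?thesis unfolding A_def RE_def by simp
qed


end
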